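(* Let $K$ be a number field. Let $\mathcal C_K$ be the set of compositum feasible triplets over $K$ and let $\mathcal C'_K$ be the set of triplets of positive integers $(a,b,c)$ with $c=\mathrm{lcm}(a,b)\cdot t$ for some positive integer $t\mid\gcd(a,b)$. (1) If $(a,b,c),(a',b',c')\in\mathcal C_K$ and $(a,b,c)\in\mathcal C'_K$, then $(aa',bb',cc')\in\mathcal C_K$. (2) $\mathcal C'_K\subseteq\mathcal C_K$, and $\mathcal C'_K$ is a commutative monoid under componentwise multiplication (with identity $(1,1,1)$). In particular, if $(a,b,c)\in\mathcal C'_K$ then $(a^n,b^n,c^n)\in\mathcal C'_K$ for every $n\in\mathbb N$.
   Context: Extensions are finite and inside a fixed algebraic closure $\bar K$. A triplet $(a,b,c)$ of positive integers is compositum feasible over $K$ if there exist extensions $L/K$, $L'/K$ of degrees $a$ and $b$ whose compositum $LL'$ has degree $c$ over $K$. *)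

theory Defs
  imports "HOL-Algebra.Embedded_Algebras" "HOL-Algebra.Generated_Fields" Complex_Main
begin

text \<open>Since every
finite extension of a number field inside the complex numbers consists of algebraic
numbers, subfields of the complex numbers of finite degree over K are exactly the
finite extensions of K inside the fixed algebraic closure (algebraic numbers).\<close>

definition CC :: "complex ring" where
  "CC = \<lparr>carrier = UNIV, monoid.mult = (*), one = 1, zero = 0, add = (+)\<rparr>"

definition number_field :: "complex set \<Rightarrow> bool" where
  "number_field K \<longleftrightarrow> subfield K CC \<and> (\<exists>n. ring.dimension CC n \<rat> K)"

definition ext_of_degree :: "complex set \<Rightarrow> complex set \<Rightarrow> nat \<Rightarrow> bool" where
  "ext_of_degree K L n \<longleftrightarrow> subfield L CC \<and> K \<subseteq> L \<and> ring.dimension CC n K L"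

definition compositum :: "complex set \<Rightarrow> complex set \<Rightarrow> complex set" where
  "compositum L L' = generate_field CC (L \<union> L')"

definition compositum_feasible :: "complex set \<Rightarrow> nat \<Rightarrow> nat \<Rightarrow> nat \<Rightarrow> bool" where
  "compositum_feasible K a b c \<longleftrightarrow> 0 < a \<and> 0 < b \<and> 0 < c \<and>
     (\<exists>L L'. ext_of_degree K L a \<and> ext_of_degree K L' b \<and> ext_of_degree K (compositum L L') c)"

definition feasible_set :: "complex set \<Rightarrow> (nat \<times> nat \<times> nat) set" where
  "feasible_set K = {(a, b, c). compositum_feasible K a b c}"

definition lcm_set :: "(nat \<times> nat \<times> nat) set" where
  "lcm_set = {(a, b, c). 0 < a \<and> 0 < b \<and> (\<exists>t. 0 < t \<and> t dvd gcd a b \<and> c = lcm a b * t)}"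

definition tmult :: "nat \<times> nat \<times> nat \<Rightarrow> nat \<times> nat \<times> nat \<Rightarrow> nat \<times> nat \<times> nat" where
  "tmult x y = (case x of (a, b, c) \<Rightarrow> case y of (a', b', c') \<Rightarrow> (a * a', b * b', c * c'))"

end

theory Submission
  imports Defs "HOL-Algebra.Finite_Extensions" "HOL-Computational_Algebra.Polynomial"
    "HOL-Computational_Algebra.Fundamental_Theorem_Algebra" "HOL-Computational_Algebra.Polynomial_Factorial"
    "HOL-Computational_Algebra.Field_as_Ring" "HOL-Computational_Algebra.Primes"
begin
lemma CC_simps [simp]:
  "carrier CC = UNIV" "monoid.mult CC = (*)" "one CC = 1" "zero CC = 0" "add CC = (+)"
  by (simp_all add: CC_def)

lemma field_CC: "field CC"
proof -
  have cr: "cring CC"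
    apply (rule cringI)
      apply (auto intro!: abelian_groupI comm_monoidI simp: ring_distribs)
    apply (metis add.left_inverse)
    done
  then interpret cring CC .
  show ?thesis
  proof (rule cring_fieldI)
    show "Units CC = carrier CC - {\<zero>\<^bsub>CC\<^esub>}"
      unfolding Units_def by (auto, metis left_inverse right_inverse)
  qed
qed

interpretation C: domain CC by (rule field.axioms(1)[OF field_CC])

lemma CC_pow [simp]: "x [^]\<^bsub>CC\<^esub> (n::nat) = x ^ n"
  by (induct n) auto

lemma CC_a_inv [simp]: "\<ominus>\<^bsub>CC\<^esub> x = - x"
  by (rule C.minus_equality) auto

lemma CC_minus [simp]: "x \<ominus>\<^bsub>CC\<^esub> y = x - y"
  by (simp add: a_minus_def)

lemma CC_inv [simp]: "x \<noteq> 0 \<Longrightarrow> inv\<^bsub>CC\<^esub> x = inverse x"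
  by (rule C.comm_inv_char) auto

lemma subfield_CCI:
  assumes "1 \<in> K" "\<And>x. x \<in> K \<Longrightarrow> - x \<in> K" "\<And>x y. x \<in> K \<Longrightarrow> y \<in> K \<Longrightarrow> x * y \<in> K"
    "\<And>x y. x \<in> K \<Longrightarrow> y \<in> K \<Longrightarrow> x + y \<in> K" "\<And>x. x \<in> K \<Longrightarrow> x \<noteq> 0 \<Longrightarrow> inverse x \<in> K"
  shows "subfield K CC"
  by (rule field.subfieldI'[OF field_CC], rule C.subringI) (use assms in auto)

lemma subfield_Rats: "subfield \<rat> CC"
  by (rule subfield_CCI) auto

lemma subfieldD:
  assumes "subfield K CC"
  shows "0 \<in> K" "1 \<in> K" "\<And>x. x \<in> K \<Longrightarrow> - x \<in> K" "\<And>x y. x \<in> K \<Longrightarrow> y \<in> K \<Longrightarrow> x * y \<in> K"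
    "\<And>x y. x \<in> K \<Longrightarrow> y \<in> K \<Longrightarrow> x + y \<in> K" "\<And>x. x \<in> K \<Longrightarrow> inverse x \<in> K"
    "\<And>x y. x \<in> K \<Longrightarrow> y \<in> K \<Longrightarrow> x - y \<in> K" "\<And>x y. x \<in> K \<Longrightarrow> y \<in> K \<Longrightarrow> x / y \<in> K"
    "\<And>x n. x \<in> K \<Longrightarrow> x ^ n \<in> K"
proof -
  note S = subringE[OF subfieldE(1)[OF assms]]
  show 0: "0 \<in> K" using S(2) by simp
  show 1: "1 \<in> K" using S(3) by simp
  show m: "\<And>x. x \<in> K \<Longrightarrow> - x \<in> K" using S(5) by simp
  show t: "\<And>x y. x \<in> K \<Longrightarrow> y \<in> K \<Longrightarrow> x * y \<in> K" using S(6) by simp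
  show p: "\<And>x y. x \<in> K \<Longrightarrow> y \<in> K \<Longrightarrow> x + y \<in> K" using S(7) by simp
  show i: "\<And>x. x \<in> K \<Longrightarrow> inverse x \<in> K"
  proof -
    fix x assume x: "x \<in> K"
    show "inverse x \<in> K"
    proof (cases "x = 0")
      case True thus ?thesis using 0 by simp
    next
      case False
      have "inv\<^bsub>CC\<^esub> x \<in> K"
        using C.subfield_m_inv(1)[OF assms, of x] x False by simp
      thus ?thesis using False by simp
    qed
  qed
  show "\<And>x y. x \<in> K \<Longrightarrow> y \<in> K \<Longrightarrow> x - y \<in> K" using m p by (metis diff_conv_add_uminus)
  show "\<And>x y. x \<in> K \<Longrightarrow> y \<in> K \<Longrightarrow> x / y \<in> K" using t i by (metis divide_inverse)
  show "\<And>x n. x \<in> K \<Longrightarrow> x ^ n \<in> K"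
  proof -
    fix x n assume "x \<in> K" thus "x ^ n \<in> K" using 1 t by (induct n) auto
  qed
qed

definition cp :: "complex list \<Rightarrow> complex poly" where "cp l = Poly (rev l)"
definition lp :: "complex poly \<Rightarrow> complex list" where "lp P = rev (coeffs P)"

lemma eval_cp: "C.eval l x = poly (cp l) x"
proof (induct l)
  case Nil thus ?case by (simp add: cp_def)
next
  case (Cons a l)
  have "C.eval (a # l) x = a * x ^ length l + C.eval l x"
    by simp
  thus ?case using Cons by (simp add: cp_def Poly_snoc poly_monom)
qed

lemma coeff_cp: "Polynomial.coeff (cp l) i = nth_default 0 (rev l) i"
  by (simp add: cp_def)

lemma cp_lp [simp]: "cp (lp P) = P"
  by (simp add: cp_def lp_def)

lemma eval_lp: "C.eval (lp P) x = poly P x"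
  using eval_cp[of "lp P"] by simp

lemma lp_carrier:
  assumes "\<And>i. Polynomial.coeff P i \<in> K"
  shows "lp P \<in> carrier (K[X]\<^bsub>CC\<^esub>)"
proof -
  have "set (coeffs P) \<subseteq> K"
    using assms by (auto simp: coeffs_def)
  moreover have "P \<noteq> 0 \<Longrightarrow> hd (rev (coeffs P)) \<noteq> 0"
    by (simp add: hd_rev last_coeffs_eq_coeff_degree)
  ultimately show ?thesis
    unfolding univ_poly_carrier[symmetric] polynomial_def lp_def by auto
qed

lemma lp_eq_Nil [simp]: "lp P = [] \<longleftrightarrow> P = 0"
  by (simp add: lp_def)

lemma length_lp: "P \<noteq> 0 \<Longrightarrow> length (lp P) = Suc (Polynomial.degree P)"
  by (simp add: lp_def length_coeffs_degree)

lemma carrier_polyD: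
  assumes "l \<in> carrier (K[X]\<^bsub>CC\<^esub>)"
  shows "set l \<subseteq> K" "l \<noteq> [] \<Longrightarrow> hd l \<noteq> 0"
  using assms unfolding univ_poly_carrier[symmetric] polynomial_def by auto

lemma lp_cp:
  assumes "l \<in> carrier (K[X]\<^bsub>CC\<^esub>)"
  shows "lp (cp l) = l"
proof (cases "l = []")
  case True thus ?thesis by (simp add: cp_def lp_def)
next
  case False
  then have "hd l \<noteq> 0" using carrier_polyD(2)[OF assms] by auto
  then have "last (rev l) \<noteq> 0" using False by (simp add: last_rev)
  then have "hd l \<noteq> 0" using False by (simp add: last_rev)
  then have "strip_while ((=) 0) (rev l) = rev l"
    using False by (cases l) (auto simp: strip_while_def)
  thus ?thesis by (simp add: cp_def lp_def)
qed

lemma coeff_cp_in: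
  assumes "l \<in> carrier (K[X]\<^bsub>CC\<^esub>)" "0 \<in> K"
  shows "Polynomial.coeff (cp l) i \<in> K"
proof -
  have "set (rev l) \<subseteq> K" using carrier_polyD(1)[OF assms(1)] by auto
  thus ?thesis using assms(2) by (auto simp add: coeff_cp nth_default_def) (metis length_rev nth_mem set_rev subsetD)
qed

lemma degree_cp:
  assumes "l \<in> carrier (K[X]\<^bsub>CC\<^esub>)"
  shows "Polynomial.degree (cp l) = Polynomials.degree l"
proof (cases "cp l = 0")
  case True
  then have "l = []" using lp_cp[OF assms] by (metis lp_eq_Nil)
  thus ?thesis by (simp add: cp_def)
next
  case False
  thus ?thesis using length_lp[OF False] lp_cp[OF assms] by simp
qed

lemma cp_Nil [simp]: "cp [] = 0" by (simp add: cp_def)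

lemma cp_eq_0:
  assumes "l \<in> carrier (K[X]\<^bsub>CC\<^esub>)"
  shows "cp l = 0 \<longleftrightarrow> l = []"
  using lp_cp[OF assms] by (metis cp_Nil lp_eq_Nil)

lemma lead_coeff_cp:
  assumes "l \<in> carrier (K[X]\<^bsub>CC\<^esub>)" "l \<noteq> []"
  shows "Polynomial.lead_coeff (cp l) = hd l"
proof -
  have "Polynomial.lead_coeff (cp l) = nth_default 0 (rev l) (length l - 1)"
    using degree_cp[OF assms(1)] by (simp add: coeff_cp)
  also have "\<dots> = hd l" using assms(2)
    by (simp add: nth_default_def rev_nth hd_conv_nth)
  finally show ?thesis .
qed

lemma coeff0_cp:
  assumes "l \<noteq> []"
  shows "Polynomial.coeff (cp l) 0 = last l"
  using assms by (simp add: coeff_cp nth_default_def hd_rev[symmetric] hd_conv_nth[symmetric])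

lemma cp_mult:
  assumes "set p \<subseteq> carrier CC" "set q \<subseteq> carrier CC"
  shows "cp (C.poly_mult p q) = cp p * cp q"
proof -
  have "poly (cp (C.poly_mult p q)) = poly (cp p * cp q)"
  proof
    fix x show "poly (cp (C.poly_mult p q)) x = poly (cp p * cp q) x"
      using C.eval_poly_mult[of p q x] by (simp add: eval_cp)
  qed
  thus ?thesis by (simp add: poly_eq_poly_eq_iff)
qed

lemma pdivides_cp:
  assumes "p pdivides\<^bsub>CC\<^esub> q"
  shows "cp p dvd cp q"
proof -
  obtain r where r: "r \<in> carrier (poly_ring CC)" "q = p \<otimes>\<^bsub>poly_ring CC\<^esub> r"
    using assms unfolding pdivides_def factor_def by auto
  have "q = C.poly_mult p r" using r(2) by (simp add: univ_poly_def)
  hence "cp q = cp p * cp r" by (simp add: cp_mult)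
  thus ?thesis by simp
qed

lemma pdivides_root:
  assumes "p pdivides\<^bsub>CC\<^esub> q" "poly (cp p) z = 0"
  shows "poly (cp q) z = 0"
  using pdivides_cp[OF assms(1)] assms(2) by (metis dvd_def mult_eq_0_iff poly_mult)

abbreviation alg :: "complex set \<Rightarrow> complex \<Rightarrow> bool" where
  "alg F x \<equiv> (C.algebraic over F) x"

abbreviation SE :: "complex set \<Rightarrow> complex \<Rightarrow> complex set" where
  "SE F x \<equiv> C.simple_extension F x"

definition polyin :: "complex set \<Rightarrow> complex poly \<Rightarrow> bool" where
  "polyin F P \<longleftrightarrow> (\<forall>i. Polynomial.coeff P i \<in> F)"

definition mp :: "complex set \<Rightarrow> complex \<Rightarrow> complex poly" where
  "mp F x = cp (C.Irr F x)"

lemma algI: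
  assumes "polyin F P" "P \<noteq> 0" "poly P x = 0"
  shows "alg F x"
  by (rule C.algebraicI[of "lp P"]) (use assms in \<open>auto simp: polyin_def lp_carrier eval_lp\<close>)

context
  fixes F x
  assumes F: "subfield F CC" and a: "alg F x"
begin

lemma Irr_props:
  "C.Irr F x \<in> carrier (F[X]\<^bsub>CC\<^esub>)" "pirreducible\<^bsub>CC\<^esub> F (C.Irr F x)"
  "hd (C.Irr F x) = 1" "C.eval (C.Irr F x) x = 0"
  using C.IrrE[OF F _ a] by auto

lemma mp_polyin: "polyin F (mp F x)"
  unfolding polyin_def mp_def using coeff_cp_in[OF Irr_props(1)] subfieldD(1)[OF F] by auto

lemma mp_root: "poly (mp F x) x = 0"
  using Irr_props(4) by (simp add: mp_def eval_cp)

lemma Irr_ne: "C.Irr F x \<noteq> []"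
  using C.pirreducible_degree[OF F Irr_props(1,2)] by auto

lemma mp_monic: "Polynomial.lead_coeff (mp F x) = 1"
  using lead_coeff_cp[OF Irr_props(1) Irr_ne] Irr_props(3) by (simp add: mp_def)

lemma mp_ne: "mp F x \<noteq> 0"
  using mp_monic by auto

lemma mp_degree: "Polynomial.degree (mp F x) = Polynomials.degree (C.Irr F x)"
  unfolding mp_def by (rule degree_cp[OF Irr_props(1)])

lemma mp_degree_ge1: "Polynomial.degree (mp F x) \<ge> 1"
  using C.pirreducible_degree[OF F Irr_props(1,2)] mp_degree by simp

lemma mp_dvd:
  assumes "polyin F P" "poly P x = 0"
  shows "mp F x dvd P"
proof -
  have "lp P \<in> carrier (F[X]\<^bsub>CC\<^esub>)" using assms(1) lp_carrier polyin_def by auto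
  moreover have "C.eval (lp P) x = 0" using assms(2) by (simp add: eval_lp)
  ultimately have "C.Irr F x pdivides\<^bsub>CC\<^esub> lp P"
    using C.Irr_minimal[OF F _ a] by auto
  thus ?thesis using pdivides_cp unfolding mp_def by fastforce
qed

lemma mp_degree_le:
  assumes "polyin F P" "poly P x = 0" "P \<noteq> 0"
  shows "Polynomial.degree (mp F x) \<le> Polynomial.degree P"
  using mp_dvd[OF assms(1,2)] assms(3) by (simp add: dvd_imp_degree_le)

lemma dim_SE: "C.dimension (Polynomial.degree (mp F x)) F (SE F x)"
  using C.dimension_simple_extension[OF F _ a] mp_degree by simp

lemma SE_subfield: "subfield (SE F x) CC"
  using C.simple_extension_is_subfield[OF F] a by simp

end

lemma polyin_pCons: "polyin F (pCons a P) \<longleftrightarrow> a \<in> F \<and> polyin F P"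
proof
  assume h: "polyin F (pCons a P)"
  have "a \<in> F" using h[unfolded polyin_def, rule_format, of 0] by simp
  moreover have "polyin F P" unfolding polyin_def
  proof
    fix i show "Polynomial.coeff P i \<in> F" using h[unfolded polyin_def, rule_format, of "Suc i"] by simp
  qed
  ultimately show "a \<in> F \<and> polyin F P" by simp
next
  assume "a \<in> F \<and> polyin F P"
  thus "polyin F (pCons a P)" by (auto simp: polyin_def coeff_pCons split: nat.splits)
qed

lemma polyin_0 [simp]: "0 \<in> F \<Longrightarrow> polyin F 0"
  by (simp add: polyin_def)

context
  fixes F assumes F: "subfield F CC"
begin

lemma of_nat_in: "of_nat n \<in> F"
  by (induct n) (auto intro: subfieldD(1,2,5)[OF F])

lemma of_int_in: "of_int n \<in> F"
  by (cases n rule: int_cases) (auto intro: of_nat_in subfieldD(3)[OF F] simp del: of_nat_Suc)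

lemma Rats_sub: "\<rat> \<subseteq> F"
proof
  fix x :: complex assume "x \<in> \<rat>"
  then obtain a b where "x = of_int a / of_int b" by (auto elim: Rats_cases')
  thus "x \<in> F" using of_int_in subfieldD(8)[OF F] by simp
qed

lemma polyin_const: "a \<in> F \<Longrightarrow> polyin F [:a:]"
  using subfieldD[OF F] by (auto simp: polyin_def coeff_pCons split: nat.splits)

lemma polyin_add: "polyin F P \<Longrightarrow> polyin F Q \<Longrightarrow> polyin F (P + Q)"
  using subfieldD[OF F] by (auto simp: polyin_def)

lemma polyin_uminus: "polyin F P \<Longrightarrow> polyin F (- P)"
  using subfieldD[OF F] by (auto simp: polyin_def)

lemma polyin_diff: "polyin F P \<Longrightarrow> polyin F Q \<Longrightarrow> polyin F (P - Q)"
  using subfieldD[OF F] by (auto simp: polyin_def)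

lemma polyin_smult: "a \<in> F \<Longrightarrow> polyin F P \<Longrightarrow> polyin F (smult a P)"
  using subfieldD[OF F] by (auto simp: polyin_def)

lemma polyin_monom: "a \<in> F \<Longrightarrow> polyin F (monom a n)"
  using subfieldD[OF F] by (auto simp: polyin_def coeff_monom)

lemma polyin_mult: "polyin F P \<Longrightarrow> polyin F Q \<Longrightarrow> polyin F (P * Q)"
proof (induct P)
  case 0 thus ?case using subfieldD(1)[OF F] by simp
next
  case (pCons a P)
  have "pCons a P * Q = smult a Q + pCons 0 (P * Q)" by simp
  moreover have "polyin F (pCons 0 (P * Q))"
    using pCons polyin_pCons subfieldD(1)[OF F] by auto
  ultimately show ?case using pCons polyin_pCons polyin_add polyin_smult by auto
qed

lemma polyin_power: "polyin F P \<Longrightarrow> polyin F (P ^ n)"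
proof (induct n)
  case 0
  have "polyin F [:1:]" by (rule polyin_const) (rule subfieldD(2)[OF F])
  thus ?case by (simp add: one_pCons)
next
  case (Suc n) thus ?case by (simp add: polyin_mult)
qed

lemma polyin_pcompose: "polyin F P \<Longrightarrow> polyin F Q \<Longrightarrow> polyin F (pcompose P Q)"
proof (induct P)
  case 0 thus ?case using subfieldD(1)[OF F] by simp
next
  case (pCons a P)
  have "polyin F [:a:]" using pCons polyin_pCons polyin_const by auto
  thus ?case using pCons polyin_pCons polyin_add polyin_mult by (simp add: pcompose_pCons)
qed

lemma polyin_pderiv: "polyin F P \<Longrightarrow> polyin F (pderiv P)"
  unfolding polyin_def coeff_pderiv using subfieldD(4)[OF F] of_nat_in by blast

lemma polyin_mono: "F \<subseteq> G \<Longrightarrow> polyin F P \<Longrightarrow> polyin G P"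
  by (auto simp: polyin_def)

end

lemma subfield_subalgebra:
  assumes "subfield E CC" "K \<subseteq> E"
  shows "subalgebra K E CC"
proof -
  have "subgroup E (add_monoid CC)"
    using subring.axioms(1)[OF subfieldE(1)[OF assms(1)]] .
  moreover have "\<And>k v. k \<in> K \<Longrightarrow> v \<in> E \<Longrightarrow> k \<otimes>\<^bsub>CC\<^esub> v \<in> E"
    using subfieldD(4)[OF assms(1)] assms(2) by auto
  ultimately show ?thesis
    unfolding subalgebra_def subalgebra_axioms_def by auto
qed

lemma SE_incl: "F \<subseteq> SE F x"
  by (rule C.simple_extension_incl) auto

lemma SE_mem: "subfield F CC \<Longrightarrow> x \<in> SE F x"
  by (rule C.simple_extension_mem[OF subfieldE(1)]) auto

lemma SE_min: "subfield E CC \<Longrightarrow> F \<subseteq> E \<Longrightarrow> x \<in> E \<Longrightarrow> SE F x \<subseteq> E"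
  by (rule C.simple_extension_subring_incl[OF subfieldE(1)])

definition numfield :: "complex set \<Rightarrow> bool" where
  "numfield M \<longleftrightarrow> subfield M CC \<and> (\<exists>n. C.dimension n \<rat> M)"

lemma numfield_alg:
  assumes "numfield M" "x \<in> M"
  shows "alg \<rat> x"
  using assms C.finite_dimension_imp_algebraic[OF subfield_Rats subfieldE(1)]
  unfolding numfield_def C.finite_dimension_def by blast

lemma degree1_poly:
  fixes m :: "complex poly"
  assumes "Polynomial.degree m = 1" "Polynomial.lead_coeff m = 1" "poly m z = 0"
  shows "z = - Polynomial.coeff m 0"
proof -
  have "m = [:Polynomial.coeff m 0, 1:]"
  proof (rule poly_eqI)
    fix n show "Polynomial.coeff m n = Polynomial.coeff [:Polynomial.coeff m 0, 1:] n"
      using assms(1,2) by (cases n; cases "n - 1") (auto simp: coeff_eq_0)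
  qed
  then have "poly m z = Polynomial.coeff m 0 + z" by (metis poly_pCons mult_1 mult.commute add_0_right poly_0 mult_zero_right)
  thus ?thesis using assms(3) by (simp add: eq_neg_iff_add_eq_0 add.commute)
qed

lemma only_root_degree1:
  assumes F: "subfield F CC" and a: "alg F x"
    and roots: "\<And>z. poly (mp F x) z = 0 \<Longrightarrow> z = x"
  shows "x \<in> F"
proof -
  let ?m = "mp F x"
  have m0: "?m \<noteq> 0" using mp_ne[OF F a] .
  have deg1: "Polynomial.degree ?m = 1"
  proof (rule ccontr)
    assume "Polynomial.degree ?m \<noteq> 1"
    then have d2: "Polynomial.degree ?m \<ge> 2" using mp_degree_ge1[OF F a] by linarith
    have "size (proots ?m) = Polynomial.degree ?m"
      by (rule size_proots_complex)
    have set: "set_mset (proots ?m) \<subseteq> {x}" using roots m0 by auto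
    hence "proots ?m = replicate_mset (size (proots ?m)) x"
      by (metis set_mset_subset_singletonD)
    hence "order x ?m = Polynomial.degree ?m"
      using m0 \<open>size (proots ?m) = _\<close> by (metis count_proots count_replicate_mset)
    hence ord: "order x ?m \<ge> 2" using d2 by simp
    have pd0: "pderiv ?m \<noteq> 0" using d2 by (simp add: pderiv_eq_0_iff)
    have "order x ?m = Suc (order x (pderiv ?m))"
      by (rule order_pderiv[OF m0 mp_root[OF F a]])
    hence "order x (pderiv ?m) \<noteq> 0" using ord by simp
    hence "poly (pderiv ?m) x = 0" using order_root by blast
    hence "Polynomial.degree ?m \<le> Polynomial.degree (pderiv ?m)"
      using mp_degree_le[OF F a polyin_pderiv[OF F mp_polyin[OF F a]] _ pd0] by simp
    thus False using degree_pderiv[of ?m] d2 by simp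
  qed
  have "x = - Polynomial.coeff ?m 0"
    by (rule degree1_poly[OF deg1 mp_monic[OF F a] mp_root[OF F a]])
  moreover have "Polynomial.coeff ?m 0 \<in> F" using mp_polyin[OF F a] by (simp add: polyin_def)
  ultimately show ?thesis using subfieldD(3)[OF F] by metis
qed

lemma prim_two:
  assumes M: "numfield M" and b: "\<beta> \<in> M" and g: "\<gamma> \<in> M"
  shows "\<exists>c::nat. \<gamma> \<in> SE \<rat> (\<beta> + of_nat c * \<gamma>)"
proof -
  have MF: "subfield M CC" using M numfield_def by auto
  note Q = subfield_Rats
  have ab: "alg \<rat> \<beta>" and ag: "alg \<rat> \<gamma>" using numfield_alg[OF M] b g by auto
  define f where "f = mp \<rat> \<beta>"
  define G where "G = mp \<rat> \<gamma>"
  have f0: "f \<noteq> 0" and G0: "G \<noteq> 0" using mp_ne[OF Q ab] mp_ne[OF Q ag] f_def G_def by auto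
  define Bad where "Bad = (\<lambda>(b, z). (b - \<beta>) / (\<gamma> - z)) ` ({b. poly f b = 0} \<times> {z. poly G z = 0})"
  have "finite Bad" unfolding Bad_def using poly_roots_finite[OF f0] poly_roots_finite[OF G0] by auto
  hence "finite {c::nat. of_nat c \<in> Bad}"
    by (rule finite_vimageI[of Bad "of_nat", unfolded vimage_def]) (simp add: inj_on_def)
  then obtain c :: nat where c: "of_nat c \<notin> Bad"
    by (metis (mono_tags, lifting) infinite_UNIV_nat ex_new_if_finite mem_Collect_eq)
  define \<theta> where "\<theta> = \<beta> + of_nat c * \<gamma>"
  have thM: "\<theta> \<in> M" unfolding \<theta>_def using subfieldD[OF MF] b g of_nat_in[OF MF] by auto
  have ath: "alg \<rat> \<theta>" using numfield_alg[OF M thM] .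
  define E where "E = SE \<rat> \<theta>"
  have EF: "subfield E CC" unfolding E_def using SE_subfield[OF Q ath] .
  have QE: "\<rat> \<subseteq> E" unfolding E_def by (rule SE_incl)
  have thE: "\<theta> \<in> E" unfolding E_def by (rule SE_mem[OF Q])
  have agE: "alg E \<gamma>" using C.algebraic_mono[OF QE] ag by blast
  define h where "h = pcompose f [:\<theta>, - of_nat c:]"
  have fE: "polyin E f" unfolding f_def by (rule polyin_mono[OF Q QE mp_polyin[OF Q ab]])
  have GE: "polyin E G" unfolding G_def by (rule polyin_mono[OF Q QE mp_polyin[OF Q ag]])
  have hE: "polyin E h" unfolding h_def
    using polyin_pcompose[OF EF fE] polyin_pCons polyin_const[OF EF] thE subfieldD(3)[OF EF] of_nat_in[OF EF]
    by auto
  have hroot: "poly h \<gamma> = 0" unfolding h_def \<theta>_def f_def using mp_root[OF Q ab] by (simp add: poly_pcompose)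
  have Groot: "poly G \<gamma> = 0" unfolding G_def using mp_root[OF Q ag] .
  have d1: "mp E \<gamma> dvd h" using mp_dvd[OF EF agE hE hroot] .
  have d2: "mp E \<gamma> dvd G" using mp_dvd[OF EF agE GE Groot] .
  have "\<gamma> \<in> E"
  proof (rule only_root_degree1[OF EF agE])
    fix z assume z: "poly (mp E \<gamma>) z = 0"
    have hz: "poly h z = 0" using d1 z by (metis dvd_def mult_eq_0_iff poly_mult)
    have Gz: "poly G z = 0" using d2 z by (metis dvd_def mult_eq_0_iff poly_mult)
    show "z = \<gamma>"
    proof (rule ccontr)
      assume nz: "z \<noteq> \<gamma>"
      define b where "b = \<theta> - of_nat c * z"
      have fb: "poly f b = 0" using hz unfolding h_def b_def by (simp add: poly_pcompose algebra_simps)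
      have "b - \<beta> = of_nat c * (\<gamma> - z)" unfolding b_def \<theta>_def by (simp add: algebra_simps)
      hence "of_nat c = (b - \<beta>) / (\<gamma> - z)" using nz by (simp add: field_simps)
      hence "of_nat c \<in> Bad" unfolding Bad_def using fb Gz by force
      thus False using c by simp
    qed
  qed
  thus ?thesis unfolding E_def \<theta>_def by blast
qed

lemma prim_list:
  assumes M: "numfield M"
  shows "set xs \<subseteq> M \<Longrightarrow> \<exists>\<theta> \<in> M. set xs \<subseteq> SE \<rat> \<theta>"
proof (induct xs)
  case Nil thus ?case using M subfieldD(1) unfolding numfield_def by auto
next
  case (Cons x xs)
  then obtain \<theta> where th: "\<theta> \<in> M" "set xs \<subseteq> SE \<rat> \<theta>" by auto
  have MF: "subfield M CC" using M numfield_def by auto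
  have xM: "x \<in> M" using Cons by auto
  obtain c :: nat where c: "x \<in> SE \<rat> (\<theta> + of_nat c * x)" using prim_two[OF M th(1) xM] by blast
  define \<eta> where "\<eta> = \<theta> + of_nat c * x"
  have etaM: "\<eta> \<in> M" unfolding \<eta>_def using subfieldD[OF MF] th(1) xM of_nat_in[OF MF] by auto
  have aeta: "alg \<rat> \<eta>" using numfield_alg[OF M etaM] .
  have EF: "subfield (SE \<rat> \<eta>) CC" using SE_subfield[OF subfield_Rats aeta] .
  have "\<theta> = \<eta> - of_nat c * x" unfolding \<eta>_def by simp
  moreover have "\<eta> - of_nat c * x \<in> SE \<rat> \<eta>"
    using subfieldD(4,7)[OF EF] SE_mem[OF subfield_Rats, of \<eta>] c of_nat_in[OF EF]
    unfolding \<eta>_def by blast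
  ultimately have "\<theta> \<in> SE \<rat> \<eta>" by simp
  hence "SE \<rat> \<theta> \<subseteq> SE \<rat> \<eta>" using SE_min[OF EF SE_incl] by blast
  thus ?case using th c etaM unfolding \<eta>_def by auto
qed

lemma primitive_element:
  assumes M: "numfield M"
  shows "\<exists>\<theta> \<in> M. M = SE \<rat> \<theta>"
proof -
  have MF: "subfield M CC" using M numfield_def by auto
  obtain n where n: "C.dimension n \<rat> M" using M numfield_def by auto
  obtain Us where Us: "set Us \<subseteq> carrier CC" "C.independent \<rat> Us" "C.Span \<rat> Us = M"
    using C.exists_base[OF subfield_Rats n] by auto
  have "set Us \<subseteq> M" using C.Span_base_incl[OF subfield_Rats Us(1)] Us(3) by auto
  then obtain \<theta> where th: "\<theta> \<in> M" "set Us \<subseteq> SE \<rat> \<theta>" using prim_list[OF M] by blast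
  have ath: "alg \<rat> \<theta>" using numfield_alg[OF M th(1)] .
  have EF: "subfield (SE \<rat> \<theta>) CC" using SE_subfield[OF subfield_Rats ath] .
  have "M \<subseteq> SE \<rat> \<theta>"
    using C.subalgebra_Span_incl[OF subfield_Rats subfield_subalgebra[OF EF SE_incl] th(2)] Us(3) by simp
  moreover have "SE \<rat> \<theta> \<subseteq> M" using SE_min[OF MF Rats_sub[OF MF] th(1)] .
  ultimately show ?thesis using th(1) by blast
qed

lemma mpi_add: "map_poly (of_int :: int \<Rightarrow> 'a::comm_ring_1) (p + q) = map_poly of_int p + map_poly of_int q"
  by (rule poly_eqI) (simp add: coeff_map_poly)

lemma mpi_diff: "map_poly (of_int :: int \<Rightarrow> 'a::comm_ring_1) (p - q) = map_poly of_int p - map_poly of_int q"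
  by (rule poly_eqI) (simp add: coeff_map_poly)

lemma mpi_mult: "map_poly (of_int :: int \<Rightarrow> 'a::comm_ring_1) (p * q) = map_poly of_int p * map_poly of_int q"
  by (rule poly_eqI) (simp add: coeff_map_poly coeff_mult)

lemma mpi_const: "map_poly (of_int :: int \<Rightarrow> 'a::comm_ring_1) [:c:] = [:of_int c:]"
  by (rule poly_eqI) (simp add: coeff_map_poly coeff_pCons split: nat.splits)

lemma mpi_one: "map_poly (of_int :: int \<Rightarrow> 'a::comm_ring_1) 1 = 1"
  by simp

lemma mpi_power: "map_poly (of_int :: int \<Rightarrow> 'a::comm_ring_1) (p ^ n) = map_poly of_int p ^ n"
  by (induct n) (simp_all add: mpi_mult)

lemma mpi_pderiv: "map_poly (of_int :: int \<Rightarrow> 'a::idom) (pderiv p) = pderiv (map_poly of_int p)"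
  by (rule poly_eqI) (simp add: coeff_map_poly coeff_pderiv)

lemma poly_mpi: "poly (map_poly (of_int :: int \<Rightarrow> 'a::comm_ring_1) p) (of_int x) = of_int (poly p x)"
  by (induct p) (simp_all add: map_poly_pCons)

lemma mpi_inj: "map_poly (of_int :: int \<Rightarrow> 'a::{comm_ring_1,ring_char_0}) p = map_poly of_int q \<Longrightarrow> p = q"
  by (metis (mono_tags) coeff_map_poly of_int_0 of_int_eq_iff poly_eqI)

lemma degree_mpi: "Polynomial.degree (map_poly (of_int :: int \<Rightarrow> 'a::{comm_ring_1,ring_char_0}) p) = Polynomial.degree p"
  by (rule degree_map_poly) simp

lemma coeff_mpi: "Polynomial.coeff (map_poly (of_int :: int \<Rightarrow> 'a::comm_ring_1) p) i = of_int (Polynomial.coeff p i)"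
  by (simp add: coeff_map_poly)

lemma mpr_add: "map_poly (of_rat :: rat \<Rightarrow> 'a::field_char_0) (p + q) = map_poly of_rat p + map_poly of_rat q"
  by (rule poly_eqI) (simp add: coeff_map_poly of_rat_add)

lemma mpr_mult: "map_poly (of_rat :: rat \<Rightarrow> 'a::field_char_0) (p * q) = map_poly of_rat p * map_poly of_rat q"
  by (rule poly_eqI) (simp add: coeff_map_poly coeff_mult of_rat_sum of_rat_mult)

lemma mpr_pderiv: "map_poly (of_rat :: rat \<Rightarrow> 'a::field_char_0) (pderiv p) = pderiv (map_poly of_rat p)"
  by (rule poly_eqI) (simp add: coeff_map_poly coeff_pderiv of_rat_mult of_rat_add)

lemma mpr_of_int: "map_poly (of_rat :: rat \<Rightarrow> 'a::field_char_0) (map_poly of_int p) = map_poly of_int p"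
  by (rule poly_eqI) (simp add: coeff_map_poly)

lemma degree_mpr: "Polynomial.degree (map_poly (of_rat :: rat \<Rightarrow> 'a::field_char_0) p) = Polynomial.degree p"
  by (rule degree_map_poly) simp

lemma mpr_eq_0: "map_poly (of_rat :: rat \<Rightarrow> 'a::field_char_0) p = 0 \<longleftrightarrow> p = 0"
  by (simp add: map_poly_eq_0_iff)

lemma polyin_mpr: "polyin \<rat> (map_poly (of_rat :: rat \<Rightarrow> complex) p)"
  by (simp add: polyin_def coeff_map_poly)

lemma polyin_mpi: "polyin \<rat> (map_poly (of_int :: int \<Rightarrow> complex) p)"
  by (simp add: polyin_def coeff_map_poly)

section \<open>Clearing denominators\<close>

lemma clear_denoms:
  assumes "polyin \<rat> (P :: complex poly)"
  shows "\<exists>d::int. d > 0 \<and> (\<forall>i. of_int d * Polynomial.coeff P i \<in> \<int>)"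
  using assms
proof (induct P)
  case 0 thus ?case by (intro exI[of _ 1]) simp
next
  case (pCons a P)
  have "a \<in> \<rat>" "polyin \<rat> P" using pCons(3) polyin_pCons by auto
  then obtain d' where d': "d' > 0" "\<forall>i. of_int d' * Polynomial.coeff P i \<in> \<int>" using pCons(2) by auto
  obtain x y where xy: "a = of_int x / of_int y" "y > 0" using \<open>a \<in> \<rat>\<close> by (auto elim!: Rats_cases')
  have "\<forall>i. of_int (d' * y) * Polynomial.coeff (pCons a P) i \<in> \<int>"
  proof
    fix i show "of_int (d' * y) * Polynomial.coeff (pCons a P) i \<in> \<int>"
    proof (cases i)
      case 0
      have "of_int (d' * y) * a = (of_int (d' * x) :: complex)" using xy by simp
      thus ?thesis using 0 by (simp del: of_int_mult)
    next
      case (Suc j)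
      have "of_int (d' * y) * Polynomial.coeff P j = of_int y * (of_int d' * Polynomial.coeff P j)" by simp
      also have "\<dots> \<in> \<int>" by (rule Ints_mult[OF Ints_of_int d'(2)[rule_format, of j]])
      finally show ?thesis using Suc by simp
    qed
  qed
  thus ?case using d' xy by (intro exI[of _ "d' * y"]) auto
qed

lemma clear_denoms_rat:
  fixes P :: "rat poly"
  shows "\<exists>d::int. d > 0 \<and> (\<exists>Q. smult (of_int d) P = map_poly of_int Q)"
proof -
  obtain d where d: "d > 0" "\<forall>i. of_int d * Polynomial.coeff (map_poly (of_rat :: rat \<Rightarrow> complex) P) i \<in> \<int>"
    using clear_denoms[OF polyin_mpr] by auto
  have "\<forall>i. Polynomial.coeff (smult (of_int d) P) i \<in> \<int>"
  proof
    fix i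
    have "(of_rat (of_int d * Polynomial.coeff P i) :: complex) \<in> \<int>"
      using d(2) by (simp add: coeff_map_poly of_rat_mult)
    then obtain k where "(of_rat (of_int d * Polynomial.coeff P i) :: complex) = of_int k" by (auto elim: Ints_cases)
    hence "of_int d * Polynomial.coeff P i = of_int k"
      by (metis of_rat_eq_iff of_rat_of_int_eq)
    thus "Polynomial.coeff (smult (of_int d) P) i \<in> \<int>" by simp
  qed
  then obtain Q where "smult (of_int d) P = map_poly of_int Q" using intpolyE by metis
  thus ?thesis using d by auto
qed

abbreviation ip :: "int poly \<Rightarrow> complex poly" where "ip \<equiv> map_poly of_int"

lemma SE_repr:
  assumes "x \<in> SE \<rat> t"
  shows "\<exists>P d. d \<noteq> (0::int) \<and> of_int d * x = poly (ip P) t"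
proof -
  obtain l where l: "l \<in> carrier (\<rat>[X]\<^bsub>CC\<^esub>)" "x = C.eval l t"
    using assms C.simple_extension_as_eval_img[of \<rat> t] by auto
  have pq: "polyin \<rat> (cp l)"
    unfolding polyin_def using coeff_cp_in[OF l(1)] by auto
  obtain d where d: "d > 0" "\<forall>i. of_int d * Polynomial.coeff (cp l) i \<in> \<int>"
    using clear_denoms[OF pq] by auto
  have "\<And>i. Polynomial.coeff (smult (of_int d) (cp l)) i \<in> \<int>" using d(2) by simp
  then obtain P where P: "smult (of_int d) (cp l) = ip P" using intpolyE by metis
  have "of_int d * x = poly (ip P) t" unfolding l(2) eval_cp P[symmetric] by simp
  thus ?thesis using d(1) by (intro exI[of _ P] exI[of _ d]) auto
qed

definition good_model :: "complex \<Rightarrow> int poly \<Rightarrow> bool" where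
  "good_model t H \<longleftrightarrow> Polynomial.lead_coeff H = 1 \<and> Polynomial.degree H \<ge> 1 \<and> poly (ip H) t = 0 \<and>
     (\<forall>P. poly (ip P) t = 0 \<longrightarrow> H dvd P) \<and>
     (\<exists>A B c. c \<noteq> 0 \<and> A * H + B * pderiv H = [:c:])"

lemma int_model:
  assumes a: "alg \<rat> \<theta>"
  shows "\<exists>t H. SE \<rat> t = SE \<rat> \<theta> \<and> good_model t H"
proof -
  note Q = subfield_Rats
  define f where "f = mp \<rat> \<theta>"
  define D where "D = Polynomial.degree f"
  have fq: "polyin \<rat> f" and fm: "Polynomial.lead_coeff f = 1" and fr: "poly f \<theta> = 0"
    and D1: "D \<ge> 1"
    using mp_polyin[OF Q a] mp_monic[OF Q a] mp_root[OF Q a] mp_degree_ge1[OF Q a] unfolding f_def D_def by auto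
  obtain d where d: "d > 0" "\<forall>i. of_int d * Polynomial.coeff f i \<in> \<int>" using clear_denoms[OF fq] by auto
  define dc where "dc = (of_int d :: complex)"
  have dc0: "dc \<noteq> 0" using d(1) dc_def by simp
  define t where "t = dc * \<theta>"
  define Hc where "Hc = smult (dc ^ D) (pcompose f [:0, 1 / dc:])"
  have cHc: "Polynomial.coeff Hc i = dc ^ D * (1 / dc) ^ i * Polynomial.coeff f i" for i
    unfolding Hc_def by (simp add: coeff_pcompose_linear)
  have HcZ: "Polynomial.coeff Hc i \<in> \<int>" for i
  proof (cases "i < D")
    case True
    have "dc ^ D * (1 / dc) ^ i = dc ^ (D - 1 - i) * dc"
      using True dc0 by (simp add: power_diff[symmetric] power_one_over field_simps Suc_diff_Suc flip: power_Suc)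
    hence "Polynomial.coeff Hc i = dc ^ (D - 1 - i) * (dc * Polynomial.coeff f i)" using cHc by simp
    also have "\<dots> \<in> \<int>" using d(2) unfolding dc_def
      by (intro Ints_mult[OF Ints_power[OF Ints_of_int]]) (simp del: Ints_mult)
    finally show ?thesis .
  next
    case False
    show ?thesis
    proof (cases "i = D")
      case True
      have "Polynomial.coeff f i = 1" using fm True D_def by simp
      thus ?thesis using cHc True dc0 by (simp add: power_one_over)
    next
      case False
      hence "i > D" using \<open>\<not> i < D\<close> by simp
      hence "Polynomial.coeff f i = 0" using D_def coeff_eq_0 by blast
      thus ?thesis using cHc by simp
    qed
  qed
  then obtain H where H: "Hc = ip H" using intpolyE by metis
  have degHc: "Polynomial.degree Hc = D"
    unfolding Hc_def D_def using dc0 by (simp add: degree_pcompose)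
  have lcHc: "Polynomial.lead_coeff Hc = 1"
    using cHc[of D] degHc fm D_def dc0 by (simp add: power_one_over)
  have degH: "Polynomial.degree H = D" using degHc H degree_mpi by metis
  have lcH: "Polynomial.lead_coeff H = 1"
    using lcHc H degH coeff_mpi[of H D] by (metis of_int_eq_1_iff degHc)
  have rootH: "poly (ip H) t = 0"
    unfolding H[symmetric] Hc_def t_def using fr dc0 by (simp add: poly_pcompose)
  have at: "alg \<rat> t"
    by (rule algI[of \<rat> "ip H"]) (use rootH polyin_mpi degH D1 in \<open>auto simp: map_poly_eq_0_iff\<close>)
  have tin: "t \<in> SE \<rat> \<theta>"
    unfolding t_def using subfieldD(4)[OF SE_subfield[OF Q a]] SE_mem[OF Q] SE_incl[of \<rat> \<theta>] dc_def
    by (metis Rats_of_int subsetD)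
  have thin: "\<theta> \<in> SE \<rat> t"
  proof -
    have "\<theta> = t / dc" unfolding t_def using dc0 by simp
    thus ?thesis using subfieldD(8)[OF SE_subfield[OF Q at]] SE_mem[OF Q] SE_incl[of \<rat> t] dc_def
      by (metis Rats_of_int subsetD)
  qed
  have SEeq: "SE \<rat> t = SE \<rat> \<theta>"
    using SE_min[OF SE_subfield[OF Q a] SE_incl tin] SE_min[OF SE_subfield[OF Q at] SE_incl thin] by blast
  have minimal: "Polynomial.degree P \<ge> D" if P: "polyin \<rat> P" "P \<noteq> 0" "poly P t = 0" for P
  proof -
    define P2 where "P2 = pcompose P [:0, dc:]"
    have "polyin \<rat> P2" unfolding P2_def
      using polyin_pcompose[OF Q P(1)] polyin_pCons polyin_const[OF Q] dc_def by auto
    moreover have "poly P2 \<theta> = 0" using P(3) unfolding P2_def t_def by (simp add: poly_pcompose mult.commute)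
    moreover have "P2 \<noteq> 0" unfolding P2_def using P(2) dc0 pcompose_eq_0 by fastforce
    ultimately have "D \<le> Polynomial.degree P2" using mp_degree_le[OF Q a] unfolding D_def f_def by blast
    thus ?thesis unfolding P2_def using dc0 by (simp add: degree_pcompose)
  qed
  have dvdH: "H dvd P" if P: "poly (ip P) t = 0" for P
  proof -
    obtain q r where qr: "pseudo_divmod P H = (q, r)" by fastforce
    have H0: "H \<noteq> 0" using lcH by auto
    have eq: "P = H * q + r" using pseudo_divmod(1)[OF H0 qr] lcH by simp
    have r: "r = 0 \<or> Polynomial.degree r < Polynomial.degree H" using pseudo_divmod(2)[OF H0 qr] .
    have "poly (ip r) t = 0"
      using P rootH unfolding eq by (simp add: mpi_add mpi_mult)
    have "r = 0"
    proof (rule ccontr)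
      assume r0: "r \<noteq> 0"
      hence "ip r \<noteq> 0" by (simp add: map_poly_eq_0_iff)
      hence "D \<le> Polynomial.degree (ip r)" using minimal[OF polyin_mpi] \<open>poly (ip r) t = 0\<close> by blast
      thus False using r r0 degH by (simp add: degree_mpi)
    qed
    thus ?thesis using eq by simp
  qed
  have bez: "\<exists>A B c. c \<noteq> 0 \<and> A * H + B * pderiv H = [:c:]"
  proof -
    define Hq where "Hq = (map_poly of_int H :: rat poly)"
    have HqH: "map_poly (of_rat :: rat \<Rightarrow> complex) Hq = ip H" unfolding Hq_def by (rule mpr_of_int)
    have degHq: "Polynomial.degree Hq = D" unfolding Hq_def using degH by (simp add: degree_mpi)
    define g where "g = gcd Hq (pderiv Hq)"
    have Hq0: "Hq \<noteq> 0" using degHq D1 by auto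
    have g0: "g \<noteq> 0" unfolding g_def using Hq0 by simp
    have pd0: "pderiv Hq \<noteq> 0" using degHq D1 by (simp add: pderiv_eq_0_iff)
    have degg: "Polynomial.degree g = 0"
    proof (rule ccontr)
      assume ng: "Polynomial.degree g \<noteq> 0"
      obtain k where k: "Hq = g * k" unfolding g_def by (meson dvd_def gcd_dvd1)
      have k0: "k \<noteq> 0" using k Hq0 by auto
      have "Polynomial.degree g \<le> Polynomial.degree (pderiv Hq)"
        unfolding g_def by (rule dvd_imp_degree_le[OF gcd_dvd2 pd0])
      hence dg: "Polynomial.degree g < D" using degHq D1 by (simp add: degree_pderiv)
      have dk: "Polynomial.degree k < D" using k ng g0 k0 degHq by (simp add: degree_mult_eq)
      have "poly (map_poly of_rat g) t * poly (map_poly of_rat k) t = 0"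
        using rootH HqH k by (metis mpr_mult poly_mult)
      hence "poly (map_poly of_rat g) t = 0 \<or> poly (map_poly (of_rat :: rat \<Rightarrow> complex) k) t = 0" by simp
      thus False
      proof
        assume "poly (map_poly of_rat g) t = 0"
        hence "D \<le> Polynomial.degree g" using minimal[of "map_poly of_rat g"] polyin_mpr g0
          by (simp add: degree_mpr mpr_eq_0)
        thus False using dg by simp
      next
        assume "poly (map_poly (of_rat :: rat \<Rightarrow> complex) k) t = 0"
        hence "D \<le> Polynomial.degree k" using minimal[of "map_poly of_rat k"] polyin_mpr k0
          by (simp add: degree_mpr mpr_eq_0)
        thus False using dk by simp
      qed
    qed
    obtain A' B' where AB: "A' * Hq + B' * pderiv Hq = g"
      using bezout_coefficients_fst_snd[of Hq "pderiv Hq"] unfolding g_def by blast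
    obtain eA PA where eA: "eA > 0" "smult (of_int eA) A' = map_poly of_int PA" using clear_denoms_rat by blast
    obtain eB PB where eB: "eB > 0" "smult (of_int eB) B' = map_poly of_int PB" using clear_denoms_rat by blast
    define A where "A = smult eB PA"
    define B where "B = smult eA PB"
    have "map_poly (of_int :: int \<Rightarrow> rat) (A * H + B * pderiv H) = smult (of_int (eA * eB)) g"
    proof -
      have "map_poly (of_int :: int \<Rightarrow> rat) (A * H + B * pderiv H)
          = smult (of_int eB) (map_poly of_int PA) * Hq + smult (of_int eA) (map_poly of_int PB) * pderiv Hq"
        unfolding A_def B_def Hq_def by (simp add: mpi_add mpi_mult mpi_pderiv map_poly_smult)
      also have "\<dots> = smult (of_int (eA * eB)) (A' * Hq + B' * pderiv Hq)"
        using eA(2) eB(2) by (simp add: algebra_simps smult_add_right flip: eA(2) eB(2))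
      finally show ?thesis using AB by simp
    qed
    moreover obtain g0c where g0c: "g = [:g0c:]" "g0c \<noteq> 0" using degg g0 by (metis degree_eq_zeroE pCons_eq_0_iff)
    ultimately have E: "map_poly (of_int :: int \<Rightarrow> rat) (A * H + B * pderiv H) = [:of_int (eA * eB) * g0c:]"
      by simp
    define c where "c = Polynomial.coeff (A * H + B * pderiv H) 0"
    have eq: "A * H + B * pderiv H = [:c:]"
    proof (rule poly_eqI)
      fix n
      show "Polynomial.coeff (A * H + B * pderiv H) n = Polynomial.coeff [:c:] n"
      proof (cases n)
        case 0 thus ?thesis using c_def by simp
      next
        case (Suc m)
        have "(of_int (Polynomial.coeff (A * H + B * pderiv H) n) :: rat) = Polynomial.coeff [:of_int (eA * eB) * g0c:] n"
          using arg_cong[OF E, of "\<lambda>p. Polynomial.coeff p n"] by (simp only: coeff_mpi)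
        thus ?thesis using Suc by simp
      qed
    qed

    have "(of_int c :: rat) = of_int (eA * eB) * g0c"
      using E c_def coeff_mpi[of "A * H + B * pderiv H" 0, where 'a = rat] by simp
    hence "c \<noteq> 0" using eA(1) eB(1) g0c(2) by auto
    thus ?thesis using eq by blast
  qed
  have "good_model t H"
    unfolding good_model_def using lcH degH D1 rootH dvdH bez by auto
  thus ?thesis using SEeq by blast
qed

lemma poly_diff_dvd: "(h::int) dvd (poly Q (r + h) - poly Q r)"
proof (induct Q)
  case 0 thus ?case by simp
next
  case (pCons a Q)
  have "poly (pCons a Q) (r + h) - poly (pCons a Q) r = r * (poly Q (r + h) - poly Q r) + h * poly Q (r + h)"
    by (simp add: algebra_simps)
  thus ?case using pCons by simp
qed

lemma poly_taylor2: "(h::int)^2 dvd (poly H (r + h) - poly H r - h * poly (pderiv H) r)"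
proof (induct H)
  case 0 thus ?case by simp
next
  case (pCons a Q)
  have e: "poly (pCons a Q) (r + h) - poly (pCons a Q) r - h * poly (pderiv (pCons a Q)) r
      = r * (poly Q (r + h) - poly Q r - h * poly (pderiv Q) r) + h * (poly Q (r + h) - poly Q r)"
    by (simp add: pderiv_pCons algebra_simps)
  obtain w where w: "poly Q (r + h) - poly Q r = h * w" using poly_diff_dvd[of h Q r] by (auto elim: dvdE)
  have "h^2 dvd h * (poly Q (r + h) - poly Q r)" using w by (simp add: power2_eq_square)
  thus ?case using pCons e by simp
qed

lemma hensel_step:
  fixes p :: int
  assumes p: "prime p" and K: "K \<ge> 1" and r: "p ^ K dvd poly H r" and nd: "\<not> p dvd poly (pderiv H) r"
  shows "\<exists>r'. p dvd (r' - r) \<and> p ^ Suc K dvd poly H r'"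
proof -
  obtain w where w: "poly H r = p ^ K * w" using r by (auto elim: dvdE)
  have cop: "coprime (poly (pderiv H) r) p"
    using nd p by (metis coprime_commute prime_imp_coprime)
  then obtain u v where uv: "u * poly (pderiv H) r + v * p = 1"
    by (metis bezout_int coprime_iff_gcd_eq_1)
  define t where "t = - w * u"
  define r' where "r' = r + t * p ^ K"
  obtain G where G: "poly H r' - poly H r - (t * p ^ K) * poly (pderiv H) r = (t * p ^ K)^2 * G"
    using poly_taylor2[of "t * p ^ K" H r] unfolding r'_def by (auto elim: dvdE)
  have w1: "w + t * poly (pderiv H) r = w * (1 - u * poly (pderiv H) r)" unfolding t_def by (simp add: algebra_simps)
  have "1 - u * poly (pderiv H) r = v * p" using uv by (simp add: algebra_simps)
  hence wt: "w + t * poly (pderiv H) r = w * v * p" using w1 by simp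
  have "poly H r' = p ^ K * (w + t * poly (pderiv H) r) + (t * p ^ K)^2 * G"
    using G w by (simp add: algebra_simps)
  also have "\<dots> = p ^ Suc K * (w * v) + p ^ Suc K * (p ^ (K - 1) * t^2 * G)"
  proof -
    have ee: "Suc K + (K - 1) = K + K" using K by simp
    have "(t * p ^ K)^2 = p ^ (Suc K + (K - 1)) * t^2"
      unfolding ee by (simp add: power2_eq_square power_add)
    hence "(t * p ^ K)^2 = p ^ Suc K * p ^ (K - 1) * t^2" by (simp add: power_add)
    thus ?thesis using wt by (simp add: algebra_simps)
  qed
  finally have "p ^ Suc K dvd poly H r'" by (metis dvd_add dvd_triv_left)
  moreover have "p dvd (r' - r)" unfolding r'_def using K by (simp add: dvd_power)
  ultimately show ?thesis by blast
qed

lemma hensel: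
  fixes p :: int
  assumes p: "prime p" and r0: "p dvd poly H r0" and nd: "\<not> p dvd poly (pderiv H) r0"
  shows "K \<ge> 1 \<Longrightarrow> \<exists>r. p dvd (r - r0) \<and> p ^ K dvd poly H r"
proof (induct K rule: dec_induct)
  case base thus ?case using r0 by (intro exI[of _ r0]) auto
next
  case (step K)
  then obtain r where r: "p dvd (r - r0)" "p ^ K dvd poly H r" by auto
  have "(r - r0) dvd (poly (pderiv H) (r0 + (r - r0)) - poly (pderiv H) r0)"
    by (rule poly_diff_dvd)
  hence "p dvd (poly (pderiv H) r - poly (pderiv H) r0)"
    using r(1) by (simp add: dvd_trans[OF r(1)])
  hence "\<not> p dvd poly (pderiv H) r" using nd dvd_diff[of p "poly (pderiv H) r" "poly (pderiv H) r - poly (pderiv H) r0"]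
    by auto
  then obtain r' where "p dvd (r' - r)" "p ^ Suc K dvd poly H r'" using hensel_step[OF p step(1) r(2)] by auto
  moreover have "p dvd (r' - r0)" using dvd_add[OF \<open>p dvd (r' - r)\<close> r(1)] by simp
  ultimately show ?case by blast
qed

lemma valuation_contra:
  fixes p d :: int
  assumes p: "prime p" and kn: "0 < k" "k < n" and d: "d \<noteq> 0"
    and H: "\<And>K. \<exists>u. p ^ K dvd (u ^ n - d ^ n * p ^ k)"
  shows False
proof -
  have pe: "prime_elem p" using p by (rule prime_imp_prime_elem)
  have pu: "\<not> is_unit p" using pe by (rule prime_elem_not_unit)
  define Xv where "Xv = d ^ n * p ^ k"
  have Xv0: "Xv \<noteq> 0" unfolding Xv_def using d p by (auto simp: prime_gt_0_int)
  define e where "e = multiplicity p d"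
  have mX: "multiplicity p Xv = n * e + k"
    unfolding Xv_def e_def using pe d p
    by (simp add: prime_elem_multiplicity_mult_distrib prime_elem_multiplicity_power_distrib)
  define K where "K = n * e + k + 1"
  obtain u where u: "p ^ K dvd (u ^ n - Xv)" using H unfolding Xv_def by blast
  have notX: "\<not> p ^ m dvd Xv" if "m > n * e + k" for m
    using multiplicity_geI[OF Xv0 pu, of m] mX that by auto
  show False
  proof (cases "u = 0")
    case True
    hence "p ^ K dvd Xv" using u kn by (simp add: zero_power)
    thus False using notX[of K] K_def by simp
  next
    case False
    define a where "a = multiplicity p u"
    have un0: "u ^ n \<noteq> 0" using False by simp
    have mu: "multiplicity p (u ^ n) = n * a" unfolding a_def using pe False by (simp add: prime_elem_multiplicity_power_distrib)
    have divu: "p ^ m dvd u ^ n \<longleftrightarrow> m \<le> n * a" for m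
      using multiplicity_geI[OF un0 pu, of m] multiplicity_dvd'[of m p "u ^ n"] mu by auto
    have divX: "p ^ m dvd Xv \<longleftrightarrow> m \<le> n * e + k" for m
      using notX multiplicity_dvd'[of m p Xv] mX by (metis not_le)
    have diffdvd: "p ^ m dvd (u ^ n - Xv)" if "m \<le> K" for m
      using u that by (meson dvd_trans le_imp_power_dvd)
    have eq: "n * a = n * e + k"
    proof (rule ccontr)
      assume ne: "n * a \<noteq> n * e + k"
      show False
      proof (cases "n * a < n * e + k")
        case True
        have A: "p ^ (n * a + 1) dvd (u ^ n - Xv)" using diffdvd[of "n * a + 1"] True K_def by simp
        have "n * a + 1 \<le> n * e + k" using True by simp
        hence B: "p ^ (n * a + 1) dvd Xv" using divX by blast
        have "p ^ (n * a + 1) dvd u ^ n" using dvd_add[OF A B] by simp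
        thus False using divu[of "n * a + 1"] by linarith
      next
        case False
        hence lt: "n * e + k < n * a" using ne by simp
        show False
        proof (cases "n * a \<ge> K")
          case True
          have pk: "p ^ K dvd u ^ n" using divu True by simp
          have "p ^ K dvd Xv" using dvd_diff[OF pk u] by simp
          thus False using divX[of K] K_def by simp
        next
          case False
          have A: "p ^ (n * e + k + 1) dvd (u ^ n - Xv)" using diffdvd[of "n * e + k + 1"] K_def by simp
          have "n * e + k + 1 \<le> n * a" using lt by simp
          hence B: "p ^ (n * e + k + 1) dvd u ^ n" using divu by blast
          have "p ^ (n * e + k + 1) dvd Xv" using dvd_diff[OF B A] by simp
          thus False using divX[of "n * e + k + 1"] by linarith
        qed
      qed
    qed
    hence "k = n * (a - e)" by (simp add: diff_mult_distrib2)
    thus False using kn by (cases "a - e") auto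
  qed
qed

lemma schur:
  fixes H :: "int poly" and B :: int
  assumes lc: "Polynomial.lead_coeff H = 1" and dg: "Polynomial.degree H \<ge> 1"
  shows "\<exists>p r. prime p \<and> p > B \<and> p dvd poly H r"
proof (cases "poly H 0 = 0")
  case True
  obtain q :: nat where q: "prime q" "q > nat B" using bigger_prime by blast
  have "prime (int q)" using q by simp
  moreover have "int q > B" using q by linarith
  ultimately show ?thesis using True by (intro exI[of _ "int q"] exI[of _ 0]) auto
next
  case False
  define c0 where "c0 = poly H 0"
  obtain Q where HQ: "H = pCons c0 Q"
    by (metis c0_def pCons_cases poly_pCons mult_zero_left add.right_neutral)
  have Q0: "Q \<noteq> 0" using dg HQ by auto
  define N where "N = nat (max B 2)"
  define F :: int where "F = int (fact N)"
  have F2: "F \<ge> 2"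
  proof -
    have "fact 2 \<le> (fact N :: nat)" using N_def by (intro fact_mono) auto
    hence "int (fact 2) \<le> int (fact N)" by (simp only: of_nat_le_iff)
    thus ?thesis unfolding F_def by (simp add: eval_nat_numeral)
  qed
  define W where "W = smult F ([:0, 1:] * pcompose Q [:0, c0 * F:])"
  have pW: "poly W t = F * t * poly Q (c0 * F * t)" for t
    unfolding W_def by (simp add: poly_pcompose algebra_simps)
  have pc0: "pcompose Q [:0, c0 * F:] \<noteq> 0" using pcompose_eq_0[of Q "[:0, c0 * F:]"] Q0 False F2 c0_def by auto
  have W0: "W \<noteq> 0" unfolding W_def using F2 pc0 by auto
  have dW: "Polynomial.degree W \<ge> 1"
  proof -
    have "Polynomial.degree ([:0, 1:] * pcompose Q [:0, c0 * F:]) = 1 + Polynomial.degree (pcompose Q [:0, c0 * F:])"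
      using pc0 by (subst degree_mult_eq) auto
    thus ?thesis unfolding W_def using F2 pc0 by simp
  qed
  have "Polynomial.degree (W + [:2:]) = Polynomial.degree W"
    by (rule degree_add_eq_left) (use dW in simp)
  hence W2: "W + [:2:] \<noteq> 0" using dW by auto
  have fin: "finite ({t. poly W t = 0} \<union> {t. poly (W + [:2:]) t = 0})"
    using poly_roots_finite[OF W0] poly_roots_finite[OF W2] by auto
  obtain t :: int where t: "t \<notin> {t. poly W t = 0} \<union> {t. poly (W + [:2:]) t = 0}"
    using ex_new_if_finite[OF infinite_UNIV_int fin] by blast
  define V where "V = 1 + poly W t"
  have V1: "V \<noteq> 1" "V \<noteq> -1" using t unfolding V_def by auto
  have FV: "F dvd V - 1" unfolding V_def pW by simp
  have V0: "V \<noteq> 0"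
  proof
    assume "V = 0"
    hence "F dvd 1" using FV by (simp add: dvd_minus_iff)
    thus False using F2 by (simp add: zdvd1_eq)
  qed
  have "\<not> is_unit V" using V1 by (simp add: abs_if split: if_splits)
  then obtain q where q: "q dvd V" "prime q" using prime_divisor_exists[OF V0] by blast
  have qB: "q > B"
  proof (rule ccontr)
    assume "\<not> q > B"
    hence "q \<le> int N" unfolding N_def by auto
    moreover have "q \<ge> 1" using q(2) by (simp add: prime_ge_1_int)
    ultimately have "nat q dvd fact N" by (intro dvd_fact) auto
    hence "int (nat q) dvd int (fact N)" by (simp only: int_dvd_int_iff)
    hence qF: "q dvd F" unfolding F_def using q(2) by (simp add: prime_ge_0_int)
    have "F dvd V - 1" using FV .
    hence qV: "q dvd V - 1" using qF by (rule dvd_trans[rotated])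
    have "q dvd V - (V - 1)" using dvd_diff[OF q(1) qV] .
    hence "q dvd 1" by simp
    thus False using q(2) by (metis not_prime_unit)
  qed
  have "poly H (c0 * F * t) = c0 * V"
    unfolding HQ V_def pW by (simp add: algebra_simps)
  hence "q dvd poly H (c0 * F * t)" using q(1) by simp
  thus ?thesis using q(2) qB by blast
qed

lemma prod_mset_neg: "(\<Prod>x\<in>#A. - (x::complex)) = (-1) ^ size A * prod_mset A"
  by (induct A) (auto simp: algebra_simps)

lemma prod_mset_pow: "(prod_mset A) ^ n = (\<Prod>x\<in>#A. (x::complex) ^ n)"
  by (induct A) (auto simp: power_mult_distrib)

lemma prod_mset_const: "(\<And>x. x \<in># A \<Longrightarrow> f x = c) \<Longrightarrow> (\<Prod>x\<in>#A. f x) = (c::complex) ^ size A"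
  by (induct A) auto

lemma no_power_in_model:
  assumes gm: "good_model t H" and p: "prime p" and r0: "p dvd poly H r0" and nd: "\<not> p dvd poly (pderiv H) r0"
    and b: "\<beta> \<in> SE \<rat> t" and kn: "0 < k" "k < n" and eq: "\<beta> ^ n = of_int p ^ k"
  shows False
proof -
  obtain d P where dP: "d \<noteq> 0" "of_int d * \<beta> = poly (ip P) t" using SE_repr[OF b] by blast
  define T where "T = P ^ n - [:d ^ n * p ^ k:]"
  have "poly (ip T) t = (of_int d * \<beta>) ^ n - of_int d ^ n * of_int p ^ k"
    unfolding T_def dP(2) by (simp add: mpi_diff mpi_power mpi_const)
  also have "\<dots> = 0" using eq by (simp add: power_mult_distrib)
  finally have "H dvd T" using gm unfolding good_model_def by blast
  then obtain S where S: "T = H * S" by (auto elim: dvdE)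
  show False
  proof (rule valuation_contra[OF p kn dP(1)])
    fix K
    obtain r where r: "p ^ Suc K dvd poly H r" using hensel[OF p r0 nd, of "Suc K"] by auto
    have "p ^ K dvd p ^ Suc K" by (simp add: le_imp_power_dvd)
    hence "p ^ K dvd poly H r" using r dvd_trans by blast
    hence "p ^ K dvd poly T r" unfolding S by simp
    hence "p ^ K dvd (poly P r ^ n - d ^ n * p ^ k)" unfolding T_def by simp
    thus "\<exists>u. p ^ K dvd u ^ n - d ^ n * p ^ k" by blast
  qed
qed

lemma radical_irred:
  assumes M: "numfield M" and n: "n \<ge> 1"
  shows "\<exists>\<alpha>. \<alpha> ^ n \<in> \<rat> \<and> alg M \<alpha> \<and> Polynomial.degree (mp M \<alpha>) = n"
proof -
  have MF: "subfield M CC" using M numfield_def by auto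
  obtain \<theta> where th: "\<theta> \<in> M" "M = SE \<rat> \<theta>" using primitive_element[OF M] by blast
  obtain t H where tH: "SE \<rat> t = SE \<rat> \<theta>" "good_model t H" using int_model[OF numfield_alg[OF M th(1)]] by blast
  have Mt: "M = SE \<rat> t" using th tH by simp
  obtain A B c where ABc: "c \<noteq> 0" "A * H + B * pderiv H = [:c:]" using tH(2) unfolding good_model_def by blast
  obtain p r0 where pr: "prime p" "p > \<bar>c\<bar>" "p dvd poly H r0"
    using schur[of H "\<bar>c\<bar>"] tH(2) unfolding good_model_def by blast
  have nd: "\<not> p dvd poly (pderiv H) r0"
  proof
    assume "p dvd poly (pderiv H) r0"
    hence "p dvd poly A r0 * poly H r0 + poly B r0 * poly (pderiv H) r0" using pr(3) by simp
    also have "poly A r0 * poly H r0 + poly B r0 * poly (pderiv H) r0 = c"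
      using arg_cong[OF ABc(2), of "\<lambda>q. poly q r0"] by simp
    finally have "\<bar>p\<bar> \<le> \<bar>c\<bar>" using dvd_imp_le_int[OF ABc(1)] by blast
    hence "p \<le> \<bar>c\<bar>" using pr(1) by (simp add: prime_gt_0_int)
    thus False using pr(2) by simp
  qed
  have key: "\<And>\<beta> k. \<beta> \<in> M \<Longrightarrow> 0 < k \<Longrightarrow> k < n \<Longrightarrow> \<beta> ^ n \<noteq> of_int p ^ k"
    using no_power_in_model[OF tH(2) pr(1) pr(3) nd] Mt by blast
  define \<alpha> where "\<alpha> = complex_of_real (root n (of_int p))"
  have p0: "(0::real) \<le> of_int p" using pr(1) by (simp add: prime_ge_0_int)
  have an: "\<alpha> ^ n = of_int p"
    unfolding \<alpha>_def using n p0 by (simp flip: of_real_power)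
  define P0 where "P0 = monom (1::complex) n - [:of_int p:]"
  have P0M: "polyin M P0" unfolding P0_def
    using polyin_diff[OF MF polyin_monom[OF MF subfieldD(2)[OF MF]] polyin_const[OF MF of_int_in[OF MF]]] .
  have degP0: "Polynomial.degree P0 = n"
  proof -
    have "P0 = monom 1 n + [:- of_int p:]" unfolding P0_def by simp
    also have "Polynomial.degree \<dots> = n" using n by (subst degree_add_eq_left) (auto simp: degree_monom_eq)
    finally show ?thesis .
  qed
  have P00: "P0 \<noteq> 0" using degP0 n by auto
  have P0r: "poly P0 \<alpha> = 0" unfolding P0_def using an by (simp add: poly_monom)
  have aM: "alg M \<alpha>" using algI[OF P0M P00 P0r] .
  define m where "m = mp M \<alpha>"
  have m1: "Polynomial.lead_coeff m = 1" using mp_monic[OF MF aM] m_def by simp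
  have m0: "m \<noteq> 0" using m1 by auto
  have mM: "polyin M m" using mp_polyin[OF MF aM] m_def by simp
  have e1: "Polynomial.degree m \<ge> 1" using mp_degree_ge1[OF MF aM] m_def by simp
  have en: "Polynomial.degree m \<le> n" using mp_degree_le[OF MF aM P0M P0r P00] degP0 m_def by simp
  have mdvd: "m dvd P0" using mp_dvd[OF MF aM P0M P0r] m_def by simp
  have "Polynomial.degree m = n"
  proof (rule ccontr)
    assume "Polynomial.degree m \<noteq> n"
    hence lt: "Polynomial.degree m < n" using en by simp
    define R where "R = proots m"
    have sR: "size R = Polynomial.degree m" unfolding R_def by (rule size_proots_complex)
    have dec: "m = (\<Prod>x\<in>#R. [:-x, 1:])"
      using complex_poly_decompose_multiset[of m] m1 unfolding R_def by simp
    have rootsR: "x ^ n = of_int p" if "x \<in># R" for x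
    proof -
      have "poly m x = 0" using that m0 unfolding R_def by simp
      hence "poly P0 x = 0" using mdvd by (metis dvd_def mult_eq_0_iff poly_mult)
      thus ?thesis unfolding P0_def by (simp add: poly_monom)
    qed
    define \<beta> where "\<beta> = prod_mset R"
    have "Polynomial.coeff m 0 = poly m 0" by (simp add: poly_0_coeff_0)
    also have "\<dots> = (\<Prod>x\<in>#R. - x)" by (subst dec) (simp add: poly_prod_mset)
    also have "\<dots> = (-1) ^ Polynomial.degree m * \<beta>" unfolding \<beta>_def by (simp add: prod_mset_neg sR)
    finally have c0: "Polynomial.coeff m 0 = (-1) ^ Polynomial.degree m * \<beta>" .
    have "\<beta> = (-1) ^ Polynomial.degree m * Polynomial.coeff m 0"
      using c0 by (simp add: power_mult_distrib[symmetric])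
    moreover have "(-1) ^ Polynomial.degree m \<in> M" using subfieldD(2,3,9)[OF MF] by blast
    moreover have "Polynomial.coeff m 0 \<in> M" using mM by (simp add: polyin_def)
    ultimately have bM: "\<beta> \<in> M" using subfieldD(4)[OF MF] by simp
    have "\<beta> ^ n = (\<Prod>x\<in>#R. x ^ n)" unfolding \<beta>_def by (rule prod_mset_pow)
    also have "\<dots> = of_int p ^ size R" by (rule prod_mset_const) (use rootsR in simp)
    finally have "\<beta> ^ n = of_int p ^ Polynomial.degree m" using sR by simp
    thus False using key[OF bM _ lt] e1 by simp
  qed
  moreover have "\<alpha> ^ n \<in> \<rat>" using an by simp
  ultimately show ?thesis using aM m_def by blast
qed

abbreviation gen :: "complex set \<Rightarrow> complex set" where "gen A \<equiv> generate_field CC A"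

lemma gen_subfield: "subfield (gen A) CC"
  by (rule field.generate_field_is_subfield[OF field_CC]) simp

lemma gen_incl: "A \<subseteq> gen A"
  using field.generate_fieldE(2)[OF field_CC, of A "gen A"] by simp

lemma gen_min: "subfield E CC \<Longrightarrow> A \<subseteq> E \<Longrightarrow> gen A \<subseteq> E"
  by (rule field.generate_field_min_subfield1[OF field_CC]) auto

lemma gen_subfield_eq: "subfield F CC \<Longrightarrow> gen F = F"
  using gen_min[of F F] gen_incl[of F] by auto

lemma numfield_eq: "number_field K \<longleftrightarrow> numfield K"
  unfolding number_field_def numfield_def by simp

lemma sandwich:
  assumes F: "subfield F CC" and F': "subfield F' CC" and FF: "F \<subseteq> F'"
    and s: "s \<ge> 1" and xs: "x ^ s \<in> \<rat>" and a': "alg F' x" and d': "Polynomial.degree (mp F' x) = s"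
  shows "alg F x" "Polynomial.degree (mp F x) = s" "C.dimension s F (SE F x)" "subfield (SE F x) CC"
proof -
  define P where "P = monom (1::complex) s - [:x ^ s:]"
  have PF: "polyin F P" unfolding P_def
    using polyin_diff[OF F polyin_monom[OF F subfieldD(2)[OF F]] polyin_const[OF F]] xs Rats_sub[OF F] by auto
  have degP: "Polynomial.degree P = s"
  proof -
    have "P = monom 1 s + [:- (x ^ s):]" unfolding P_def by simp
    also have "Polynomial.degree \<dots> = s" using s by (subst degree_add_eq_left) (auto simp: degree_monom_eq)
    finally show ?thesis .
  qed
  have P0: "P \<noteq> 0" using degP s by auto
  have Pr: "poly P x = 0" unfolding P_def by (simp add: poly_monom)
  show a: "alg F x" using algI[OF PF P0 Pr] .
  have le: "Polynomial.degree (mp F x) \<le> s" using mp_degree_le[OF F a PF Pr P0] degP by simp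
  have ge: "s \<le> Polynomial.degree (mp F x)"
    using mp_degree_le[OF F' a' polyin_mono[OF F FF mp_polyin[OF F a]] mp_root[OF F a] mp_ne[OF F a]] d' by simp
  show d: "Polynomial.degree (mp F x) = s" using le ge by simp
  show "C.dimension s F (SE F x)" using dim_SE[OF F a] d by simp
  show "subfield (SE F x) CC" using SE_subfield[OF F a] .
qed

lemma tower:
  assumes "subfield K CC" "subfield F CC" "C.dimension n K F" "C.dimension m F E"
  shows "C.dimension (n * m) K E"
  using C.telescopic_base[OF assms] .

lemma numfield_ext:
  assumes M: "numfield M" and "subfield E CC" "C.dimension m M E"
  shows "numfield E"
proof -
  obtain n where "C.dimension n \<rat> M" using M numfield_def by auto
  hence "C.dimension (n * m) \<rat> E" using tower[OF subfield_Rats _ _ assms(3)] M numfield_def by auto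
  thus ?thesis using assms(2) numfield_def by auto
qed

lemma SE_mono:
  assumes "subfield F' CC" "subfield F CC" "F \<subseteq> F'"
  shows "SE F x \<subseteq> SE F' x"
proof (rule C.simple_extension_subring_incl)
  show "subring (SE F' x) CC" by (rule C.simple_extension_is_subring[OF subfieldE(1)[OF assms(1)]]) simp
  show "F \<subseteq> SE F' x" using assms(3) SE_incl[of F' x] by auto
  show "x \<in> SE F' x" by (rule SE_mem[OF assms(1)])
qed

lemma construct:
  assumes K: "numfield K"
    and L1: "subfield L1 CC" "K \<subseteq> L1" "C.dimension a' K L1"
    and L1': "subfield L1' CC" "K \<subseteq> L1'" "C.dimension b' K L1'"
    and Mc: "C.dimension c' K (gen (L1 \<union> L1'))"
    and s: "s \<ge> 1" and u: "u \<ge> 1" and v: "v \<ge> 1"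
  shows "\<exists>L L'. subfield L CC \<and> K \<subseteq> L \<and> C.dimension (a' * s * u) K L \<and>
                subfield L' CC \<and> K \<subseteq> L' \<and> C.dimension (b' * s * v) K L' \<and>
                C.dimension (c' * s * u * v) K (gen (L \<union> L'))"
proof -
  have KF: "subfield K CC" using K numfield_def by auto
  define M where "M = gen (L1 \<union> L1')"
  have MF: "subfield M CC" unfolding M_def by (rule gen_subfield)
  have L1M: "L1 \<subseteq> M" "L1' \<subseteq> M" unfolding M_def using gen_incl[of "L1 \<union> L1'"] by auto
  have KM: "K \<subseteq> M" using L1(2) L1M by auto
  have Mn: "numfield M" using numfield_ext[OF K MF Mc[folded M_def]] .
  obtain \<gamma> where g: "\<gamma> ^ s \<in> \<rat>" "alg M \<gamma>" "Polynomial.degree (mp M \<gamma>) = s"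
    using radical_irred[OF Mn s] by blast
  define M1 where "M1 = SE M \<gamma>"
  have M1F: "subfield M1 CC" "C.dimension s M M1" unfolding M1_def using SE_subfield[OF MF g(2)] dim_SE[OF MF g(2)] g(3) by auto
  have M1n: "numfield M1" using numfield_ext[OF Mn M1F] .
  obtain \<alpha> where al: "\<alpha> ^ u \<in> \<rat>" "alg M1 \<alpha>" "Polynomial.degree (mp M1 \<alpha>) = u"
    using radical_irred[OF M1n u] by blast
  define M2 where "M2 = SE M1 \<alpha>"
  have M2F: "subfield M2 CC" "C.dimension u M1 M2" unfolding M2_def using SE_subfield[OF M1F(1) al(2)] dim_SE[OF M1F(1) al(2)] al(3) by auto
  have M2n: "numfield M2" using numfield_ext[OF M1n M2F] .
  obtain \<beta> where be: "\<beta> ^ v \<in> \<rat>" "alg M2 \<beta>" "Polynomial.degree (mp M2 \<beta>) = v"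
    using radical_irred[OF M2n v] by blast
  define M3 where "M3 = SE M2 \<beta>"
  have M3F: "subfield M3 CC" "C.dimension v M2 M3" unfolding M3_def using SE_subfield[OF M2F(1) be(2)] dim_SE[OF M2F(1) be(2)] be(3) by auto
  have MM1: "M \<subseteq> M1" unfolding M1_def by (rule SE_incl)
  have MM2: "M1 \<subseteq> M2" unfolding M2_def by (rule SE_incl)
  have MM3: "M2 \<subseteq> M3" unfolding M3_def by (rule SE_incl)
  have gM1: "\<gamma> \<in> M1" unfolding M1_def by (rule SE_mem[OF MF])
  have aM2: "\<alpha> \<in> M2" unfolding M2_def by (rule SE_mem[OF M1F(1)])
  have bM3: "\<beta> \<in> M3" unfolding M3_def by (rule SE_mem[OF M2F(1)])
  define N1 where "N1 = SE L1 \<gamma>"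
  have N1: "alg L1 \<gamma>" "C.dimension s L1 N1" "subfield N1 CC"
    using sandwich[OF L1(1) MF L1M(1) s g] unfolding N1_def by auto
  have N1M1: "N1 \<subseteq> M1" unfolding N1_def M1_def by (rule SE_mono[OF MF L1(1) L1M(1)])
  define L where "L = SE N1 \<alpha>"
  have L: "alg N1 \<alpha>" "C.dimension u N1 L" "subfield L CC"
    using sandwich[OF N1(3) M1F(1) N1M1 u al] unfolding L_def by auto
  define N1' where "N1' = SE L1' \<gamma>"
  have N1': "alg L1' \<gamma>" "C.dimension s L1' N1'" "subfield N1' CC"
    using sandwich[OF L1'(1) MF L1M(2) s g] unfolding N1'_def by auto
  have N1'M1: "N1' \<subseteq> M1" unfolding N1'_def M1_def by (rule SE_mono[OF MF L1'(1) L1M(2)])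
  define L' where "L' = SE N1' \<beta>"
  have L': "alg N1' \<beta>" "C.dimension v N1' L'" "subfield L' CC"
    using sandwich[OF N1'(3) M2F(1) _ v be] N1'M1 MM2 unfolding L'_def by auto
  have dL: "C.dimension (a' * s * u) K L"
    using tower[OF KF N1(3) tower[OF KF L1(1) L1(3) N1(2)] L(2)] .
  have dL': "C.dimension (b' * s * v) K L'"
    using tower[OF KF N1'(3) tower[OF KF L1'(1) L1'(3) N1'(2)] L'(2)] .
  have L1N1: "L1 \<subseteq> N1" unfolding N1_def by (rule SE_incl)
  have N1L: "N1 \<subseteq> L" unfolding L_def by (rule SE_incl)
  have L1'N1': "L1' \<subseteq> N1'" unfolding N1'_def by (rule SE_incl)
  have N1'L': "N1' \<subseteq> L'" unfolding L'_def by (rule SE_incl)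
  have KL: "K \<subseteq> L" using L1(2) L1N1 N1L by auto
  have KL': "K \<subseteq> L'" using L1'(2) L1'N1' N1'L' by auto
  have "gen (L \<union> L') = M3"
  proof
    have "L \<subseteq> M3"
    proof -
      have "N1 \<subseteq> M3" using N1M1 MM2 MM3 by auto
      moreover have "\<alpha> \<in> M3" using aM2 MM3 by auto
      ultimately show ?thesis unfolding L_def by (rule SE_min[OF M3F(1)])
    qed
    moreover have "L' \<subseteq> M3"
    proof -
      have "N1' \<subseteq> M3" using N1'M1 MM2 MM3 by auto
      thus ?thesis unfolding L'_def by (rule SE_min[OF M3F(1) _ bM3])
    qed
    ultimately show "gen (L \<union> L') \<subseteq> M3" using gen_min[OF M3F(1)] by auto
  next
    define G where "G = gen (L \<union> L')"
    have GF: "subfield G CC" unfolding G_def by (rule gen_subfield)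
    have LG: "L \<subseteq> G" "L' \<subseteq> G" unfolding G_def using gen_incl[of "L \<union> L'"] by auto
    have "L1 \<union> L1' \<subseteq> G" using L1N1 N1L L1'N1' N1'L' LG by auto
    hence MG: "M \<subseteq> G" unfolding M_def by (rule gen_min[OF GF])
    have gG: "\<gamma> \<in> G" using SE_mem[OF L1(1)] N1L LG(1) unfolding N1_def by auto
    have M1G: "M1 \<subseteq> G" unfolding M1_def by (rule SE_min[OF GF MG gG])
    have aG: "\<alpha> \<in> G" using SE_mem[OF N1(3)] LG(1) unfolding L_def by auto
    have M2G: "M2 \<subseteq> G" unfolding M2_def by (rule SE_min[OF GF M1G aG])
    have bG: "\<beta> \<in> G" using SE_mem[OF N1'(3)] LG(2) unfolding L'_def by auto
    show "M3 \<subseteq> G" unfolding M3_def by (rule SE_min[OF GF M2G bG])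
  qed
  moreover have "C.dimension (c' * s * u * v) K M3"
    using tower[OF KF M2F(1) tower[OF KF M1F(1) tower[OF KF MF Mc[folded M_def] M1F(2)] M2F(2)] M3F(2)] .
  ultimately have "C.dimension (c' * s * u * v) K (gen (L \<union> L'))" by simp
  thus ?thesis using dL dL' L(3) L'(3) KL KL' by blast
qed

lemma ext_dim: "ext_of_degree K L n \<longleftrightarrow> subfield L CC \<and> K \<subseteq> L \<and> C.dimension n K L"
  unfolding ext_of_degree_def by simp

lemma main1:
  assumes K: "number_field K"
    and f': "(a', b', c') \<in> feasible_set K" and l: "(a, b, c) \<in> lcm_set"
  shows "(a * a', b * b', c * c') \<in> feasible_set K"
proof -
  have Kn: "numfield K" using K numfield_eq by simp
  from f' obtain L1 L1' where pos': "0 < a'" "0 < b'" "0 < c'"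
    and L1: "ext_of_degree K L1 a'" and L1': "ext_of_degree K L1' b'"
    and M: "ext_of_degree K (compositum L1 L1') c'"
    unfolding feasible_set_def compositum_feasible_def by auto
  from l obtain t where ab: "0 < a" "0 < b" and t: "0 < t" "t dvd gcd a b" and c: "c = lcm a b * t"
    unfolding lcm_set_def by auto
  define g where "g = gcd a b"
  have g0: "g > 0" using ab g_def by simp
  obtain a1 where a1: "a = g * a1" using g_def by (metis dvd_def gcd_dvd1)
  obtain b1 where b1: "b = g * b1" using g_def by (metis dvd_def gcd_dvd2)
  from t(2) obtain s where s0: "gcd a b = t * s" by (rule dvdE)
  have s: "g = t * s" using s0 g_def by simp
  have s1: "s \<ge> 1" using s g0 by (cases s) auto
  have a10: "a1 \<ge> 1" using a1 ab by (cases a1) auto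
  have b10: "b1 \<ge> 1" using b1 ab by (cases b1) auto
  define u where "u = a1 * t"
  define v where "v = b1 * t"
  have u1: "u \<ge> 1" unfolding u_def using a10 t(1) by simp
  have v1: "v \<ge> 1" unfolding v_def using b10 t(1) by simp
  have lcm_eq: "lcm a b = g * a1 * b1"
  proof -
    have "gcd a b * lcm a b = a * b" by (rule prod_gcd_lcm_nat[symmetric])
    hence "g * lcm a b = g * (g * a1 * b1)" unfolding g_def[symmetric] using a1 b1 by (simp add: algebra_simps)
    thus ?thesis using g0 by simp
  qed
  obtain L L' where LL: "subfield L CC" "K \<subseteq> L" "C.dimension (a' * s * u) K L"
      "subfield L' CC" "K \<subseteq> L'" "C.dimension (b' * s * v) K L'"
      "C.dimension (c' * s * u * v) K (gen (L \<union> L'))"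
    using construct[OF Kn, of L1 a' L1' b' c' s u v] L1 L1' M s1 u1 v1
    unfolding ext_dim compositum_def by blast
  have e1: "a' * s * u = a * a'" unfolding u_def a1 s by (simp add: algebra_simps)
  have e2: "b' * s * v = b * b'" unfolding v_def b1 s by (simp add: algebra_simps)
  have e3: "c' * s * u * v = c * c'" unfolding u_def v_def c lcm_eq s by (simp add: algebra_simps)
  have "ext_of_degree K L (a * a')" unfolding ext_dim using LL(1,2,3) e1 by metis
  moreover have "ext_of_degree K L' (b * b')" unfolding ext_dim using LL(4,5,6) e2 by metis
  moreover have "ext_of_degree K (compositum L L') (c * c')"
  proof -
    have "K \<subseteq> gen (L \<union> L')" using LL(2) gen_incl[of "L \<union> L'"] by auto
    thus ?thesis unfolding ext_dim compositum_def using gen_subfield LL(7) e3 by metis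
  qed
  moreover have "0 < a * a'" "0 < b * b'" "0 < c * c'" using ab pos' t(1) c by (auto simp: lcm_pos_nat)
  ultimately show ?thesis unfolding feasible_set_def compositum_feasible_def by blast
qed

lemma one_feasible:
  assumes K: "number_field K"
  shows "(1, 1, 1) \<in> feasible_set K"
proof -
  have KF: "subfield K CC" using K number_field_def by auto
  have "ext_of_degree K K 1" unfolding ext_dim using KF C.dimension_one[OF KF] by auto
  moreover have "compositum K K = K" unfolding compositum_def using gen_subfield_eq[OF KF] by simp
  ultimately show ?thesis unfolding feasible_set_def compositum_feasible_def by (auto intro!: exI[of _ K])
qed

lemma lcm_set_mult:
  assumes "(a, b, c) \<in> lcm_set" "(a', b', c') \<in> lcm_set"
  shows "(a * a', b * b', c * c') \<in> lcm_set"
proof -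
  from assms obtain t t' where ab: "0 < a" "0 < b" "0 < a'" "0 < b'" and t: "0 < t" "t dvd gcd a b" "c = lcm a b * t"
    and t': "0 < t'" "t' dvd gcd a' b'" "c' = lcm a' b' * t'"
    unfolding lcm_set_def by auto
  define L where "L = lcm (a * a') (b * b')"
  have L0: "L > 0" unfolding L_def using ab by (simp add: lcm_pos_nat)
  have "a * a' dvd lcm a b * lcm a' b'" by (intro mult_dvd_mono) auto
  moreover have "b * b' dvd lcm a b * lcm a' b'" by (intro mult_dvd_mono) auto
  ultimately have "L dvd lcm a b * lcm a' b'" unfolding L_def by (rule lcm_least)
  then obtain Y where Y: "lcm a b * lcm a' b' = L * Y" by (auto elim: dvdE)
  define T where "T = Y * t * t'"
  have cc: "c * c' = L * T" unfolding T_def t(3) t'(3) using Y by (simp add: algebra_simps)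
  have T0: "T > 0" using cc ab t(1) t'(1) L0 t(3) t'(3) by (metis lcm_pos_nat nat_0_less_mult_iff)
  have "c dvd a * b"
  proof -
    have d: "lcm a b * t dvd lcm a b * gcd a b" using t(2) by (rule mult_dvd_mono[OF dvd_refl])
    have "lcm a b * gcd a b = a * b" by (metis prod_gcd_lcm_nat mult.commute)
    thus ?thesis using d t(3) by simp
  qed
  moreover have "c' dvd a' * b'"
  proof -
    have d: "lcm a' b' * t' dvd lcm a' b' * gcd a' b'" using t'(2) by (rule mult_dvd_mono[OF dvd_refl])
    have "lcm a' b' * gcd a' b' = a' * b'" by (metis prod_gcd_lcm_nat mult.commute)
    thus ?thesis using d t'(3) by simp
  qed
  ultimately have "c * c' dvd (a * a') * (b * b')"
    using mult_dvd_mono by (metis mult.assoc mult.left_commute)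
  also have "(a * a') * (b * b') = gcd (a * a') (b * b') * L" unfolding L_def by (rule prod_gcd_lcm_nat)
  finally have "T * L dvd gcd (a * a') (b * b') * L" using cc by (simp add: mult.commute)
  hence "T dvd gcd (a * a') (b * b')" using L0 by simp
  thus ?thesis unfolding lcm_set_def using ab T0 cc L_def by auto
qed

theorem mainTheorem11:
  fixes K :: "complex set"
  assumes "number_field K"
  shows "(\<forall>a b c a' b' c'. (a, b, c) \<in> feasible_set K \<and> (a', b', c') \<in> feasible_set K
            \<and> (a, b, c) \<in> lcm_set \<longrightarrow> (a * a', b * b', c * c') \<in> feasible_set K)
       \<and> lcm_set \<subseteq> feasible_set K
       \<and> (1, 1, 1) \<in> lcm_set
       \<and> (\<forall>x \<in> lcm_set. \<forall>y \<in> lcm_set. tmult x y \<in> lcm_set)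
       \<and> (\<forall>x y. tmult x y = tmult y x)
       \<and> (\<forall>x y z. tmult (tmult x y) z = tmult x (tmult y z))
       \<and> (\<forall>x. tmult (1, 1, 1) x = x)
       \<and> (\<forall>a b c (n::nat). (a, b, c) \<in> lcm_set \<longrightarrow> (a ^ n, b ^ n, c ^ n) \<in> lcm_set)"
proof (intro conjI)
  show "\<forall>a b c a' b' c'. (a, b, c) \<in> feasible_set K \<and> (a', b', c') \<in> feasible_set K
            \<and> (a, b, c) \<in> lcm_set \<longrightarrow> (a * a', b * b', c * c') \<in> feasible_set K"
    using main1[OF assms] by blast
  show "lcm_set \<subseteq> feasible_set K"
  proof
    fix x assume "x \<in> lcm_set"
    then obtain a b c where x: "x = (a, b, c)" "(a, b, c) \<in> lcm_set" by (cases x) auto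
    have "(a * 1, b * 1, c * 1) \<in> feasible_set K" using main1[OF assms one_feasible[OF assms] x(2)] .
    thus "x \<in> feasible_set K" using x by simp
  qed
  show one: "(1, 1, 1) \<in> lcm_set" unfolding lcm_set_def by auto
  show mult: "\<forall>x \<in> lcm_set. \<forall>y \<in> lcm_set. tmult x y \<in> lcm_set"
    unfolding tmult_def using lcm_set_mult by auto
  show "\<forall>x y. tmult x y = tmult y x" unfolding tmult_def by (auto simp: mult.commute split: prod.splits)
  show "\<forall>x y z. tmult (tmult x y) z = tmult x (tmult y z)"
    unfolding tmult_def by (auto simp: mult.assoc split: prod.splits)
  show "\<forall>x. tmult (1, 1, 1) x = x" unfolding tmult_def by (auto split: prod.splits)
  show "\<forall>a b c (n::nat). (a, b, c) \<in> lcm_set \<longrightarrow> (a ^ n, b ^ n, c ^ n) \<in> lcm_set"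
  proof (intro allI impI)
    fix a b c n assume abc: "(a, b, c) \<in> lcm_set"
    show "(a ^ n, b ^ n, c ^ n) \<in> lcm_set"
    proof (induct n)
      case 0 thus ?case using one by simp
    next
      case (Suc n) thus ?case using lcm_set_mult[OF abc Suc] by simp
    qed
  qed
qed

end
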